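(* Assume $f$ satisfies conditions (A0)–(A3) below. Then there exists a constant $M>0$ (depending on the constants $\alpha,R,K$ of these conditions, but not on the solution) such that every $2\pi$-periodic solution $x$ of $\ddot x(t)=f(t,x(t),\mathbf x_t,\dot x(t))$ satisfies $|\dot x(t)|\le M$ for all $t\in\mathbb R$.
   Context: Let $n,m\ge 1$ be integers, $\mathbf V=\mathbb R^n$ with Euclidean inner product $x\bullet z$ and norm $|x|$. For $\mathbf y=(y^1,\dots,y^m)\in\mathbf V^m$ put $|\mathbf y|:=\max_{j}|y^j|$. Fix reals $0=\tau_0<\tau_1<\dots<\tau_m<2\pi$ with $\tau_{m-j+1}=2\pi-\tau_j$ for $j=1,\dots,m$. Let $f:\mathbb R\times\mathbf V\times\mathbf V^m\times\mathbf V\to\mathbf V$, and for $x:\mathbb R\to\mathbf V$ put $\mathbf x_t:=(x(t-\tau_1),\dots,x(t-\tau_m))$. A $2\pi$-periodic solution is a $C^2$ function $x:\mathbb R\to\mathbf V$ with $x(t+2\pi)=x(t)$ and $\ddot x(t)=f(t,x(t),\mathbf x_t,\dot x(t))$ for all $t$. Conditions: (A0) $f$ is continuous and $2\pi$-periodic in $t$. (A1) There is $R>0$ such that for all $t$, $x,z\in\mathbf V$, $\mathbf y\in\mathbf V^m$: if $|x|\ge R$, $|\mathbf y|\le|x|$ and $x\bullet z=0$, then $x\bullet f(t,x,\mathbf y,z)>0$. (A2) There is a continuous $\phi:[0,\infty)\to(0,\infty)$ with $\int_0^\infty \frac{s\,ds}{\phi(s)}=\infty$ and $|f(t,x,\mathbf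 y,z)|\le\phi(|z|)$ whenever $|x|\le R$, $|\mathbf y|\le R$. (A3) There are $\alpha>0,K>0$ with $|f(t,x,\mathbf y,z)|\le\alpha(x\bullet f(t,x,\mathbf y,z)+|z|^2)+K$ whenever $|x|\le R$, $|\mathbf y|\le R$. *)

theory Defs
  imports "HOL-Analysis.Analysis"
begin

text \<open>Vectors in V^m are represented as functions nat => 'a; only indices 1..m matter.\<close>

definition delay_norm :: "nat \<Rightarrow> (nat \<Rightarrow> 'a::real_normed_vector) \<Rightarrow> real" where
  "delay_norm m y = Max ((\<lambda>j. norm (y j)) ` {1..m})"

definition delayed :: "nat \<Rightarrow> (nat \<Rightarrow> real) \<Rightarrow> (real \<Rightarrow> 'a::real_normed_vector) \<Rightarrow> real \<Rightarrow> (nat \<Rightarrow> 'a)" where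
  "delayed m \<tau> x t = (\<lambda>j. if j \<in> {1..m} then x (t - \<tau> j) else 0)"

definition periodic_solution ::
  "(real \<Rightarrow> 'a \<Rightarrow> (nat \<Rightarrow> 'a) \<Rightarrow> 'a \<Rightarrow> 'a) \<Rightarrow> nat \<Rightarrow> (nat \<Rightarrow> real) \<Rightarrow> (real \<Rightarrow> 'a::euclidean_space) \<Rightarrow> bool" where
  "periodic_solution f m \<tau> x \<longleftrightarrow>
     (\<forall>t. x (t + 2*pi) = x t) \<and>
     (\<forall>t. x differentiable at t) \<and>
     (\<forall>t. (\<lambda>s. vector_derivative x (at s)) differentiable at t) \<and>
     continuous_on UNIV (\<lambda>t. vector_derivative (\<lambda>s. vector_derivative x (at s)) (at t)) \<and>
     (\<forall>t. vector_derivative (\<lambda>s. vector_derivative x (at s)) (at t)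
            = f t (x t) (delayed m \<tau> x t) (vector_derivative x (at t)))"

end

theory Submission imports Defs begin
lemma inner_vderiv:
  fixes x y :: "real \<Rightarrow> 'a::real_inner"
  assumes "(x has_vector_derivative a) (at t)" "(y has_vector_derivative b) (at t)"
  shows "((\<lambda>s. x s \<bullet> y s) has_real_derivative (a \<bullet> y t + x t \<bullet> b)) (at t)"
proof -
  have "((\<lambda>s. x s \<bullet> y s) has_derivative (\<lambda>h. x t \<bullet> (h *\<^sub>R b) + (h *\<^sub>R a) \<bullet> y t)) (at t)"
    using assms unfolding has_vector_derivative_def by (intro has_derivative_inner)
  moreover have "(\<lambda>h. x t \<bullet> (h *\<^sub>R b) + (h *\<^sub>R a) \<bullet> y t) = (*) (a \<bullet> y t + x t \<bullet> b)"
    by (auto simp: fun_eq_iff algebra_simps)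
  ultimately show ?thesis unfolding has_field_derivative_def by simp
qed
lemma vderiv_periodic:
  fixes x :: "real \<Rightarrow> 'a::real_normed_vector"
  assumes per: "\<forall>t. x (t + c) = x t" and d: "\<And>t. (x has_vector_derivative x' t) (at t)"
  shows "x' (t + c) = x' t"
proof -
  have "((x \<circ> (\<lambda>s. s + c)) has_vector_derivative (1 *\<^sub>R x' (t + c))) (at t)"
    by (rule vector_diff_chain_at) (auto intro!: derivative_eq_intros d)
  moreover have "x \<circ> (\<lambda>s. s + c) = x" using per by auto
  ultimately have "(x has_vector_derivative x' (t + c)) (at t)" by simp
  then show ?thesis by (rule vector_derivative_unique_at[OF _ d])
qed
lemma per_int:
  fixes x :: "real \<Rightarrow> 'a"
  assumes per: "\<forall>t. x (t + c) = x t"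
  shows "x (t + of_int k * c) = x t"
proof -
  have n: "x (s + real n * c) = x s" for s n
  proof (induction n arbitrary: s)
    case (Suc n)
    have "x (s + real (Suc n) * c) = x ((s + real n * c) + c)" by (simp add: algebra_simps)
    also have "\<dots> = x s" using per Suc by simp
    finally show ?case .
  qed simp
  show ?thesis
  proof (cases "k \<ge> 0")
    case True then show ?thesis using n[of t "nat k"] by simp
  next
    case False
    have "x (t + of_int k * c + real (nat (-k)) * c) = x (t + of_int k * c)" by (rule n)
    moreover have e: "real (nat (-k)) = - of_int k" using False by simp
    moreover have "t + of_int k * c + real (nat (-k)) * c = t" unfolding e by (simp add: algebra_simps)
    ultimately show ?thesis by metis
  qed
qed
theorem lemma3p3:
  fixes f :: "real \<Rightarrow> 'a::euclidean_space \<Rightarrow> (nat \<Rightarrow> 'a) \<Rightarrow> 'a \<Rightarrow> 'a"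
    and m :: nat and \<tau> :: "nat \<Rightarrow> real"
  assumes m: "m \<ge> 1"
    and tau_pos: "0 < \<tau> 1"
    and tau_mono: "strict_mono_on {1..m} \<tau>"
    and tau_lt: "\<tau> m < 2 * pi"
    and tau_sym: "\<forall>j\<in>{1..m}. \<tau> (m - j + 1) = 2 * pi - \<tau> j"
    and A0: "continuous_on UNIV (\<lambda>(t, x, y, z). f t x y z)"
    and A0per: "\<forall>t x y z. f (t + 2 * pi) x y z = f t x y z"
    and A123: "\<exists>R>0.
       (\<forall>t x y z. norm x \<ge> R \<and> delay_norm m y \<le> norm x \<and> x \<bullet> z = 0
                   \<longrightarrow> x \<bullet> f t x y z > 0)
     \<and> (\<exists>\<phi> :: real \<Rightarrow> real. continuous_on {0..} \<phi> \<and> (\<forall>s\<ge>0. \<phi> s > 0)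
          \<and> filterlim (\<lambda>b. integral {0..b} (\<lambda>s. s / \<phi> s)) at_top at_top
          \<and> (\<forall>t x y z. norm x \<le> R \<and> delay_norm m y \<le> R
                \<longrightarrow> norm (f t x y z) \<le> \<phi> (norm z)))
     \<and> (\<exists>\<alpha>>0. \<exists>K>0. \<forall>t x y z. norm x \<le> R \<and> delay_norm m y \<le> R
                \<longrightarrow> norm (f t x y z) \<le> \<alpha> * (x \<bullet> f t x y z + (norm z)\<^sup>2) + K)"
  shows "\<exists>M>0. \<forall>x. periodic_solution f m \<tau> x \<longrightarrow>
            (\<forall>t. norm (vector_derivative x (at t)) \<le> M)"
proof -
  from A123 obtain R where R: "R > 0"
    and A1: "\<forall>t x y z. norm x \<ge> R \<and> delay_norm m y \<le> norm x \<and> x \<bullet> z = 0 \<longrightarrow> x \<bullet> f t x y z > 0"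
    and A3: "\<exists>\<alpha>>0. \<exists>K>0. \<forall>t x y z. norm x \<le> R \<and> delay_norm m y \<le> R
                \<longrightarrow> norm (f t x y z) \<le> \<alpha> * (x \<bullet> f t x y z + (norm z)\<^sup>2) + K"
    by blast
  from A3 obtain \<alpha> K where al: "\<alpha> > 0" and K: "K > 0"
    and A3': "\<And>t x y z. norm x \<le> R \<Longrightarrow> delay_norm m y \<le> R
                \<Longrightarrow> norm (f t x y z) \<le> \<alpha> * (x \<bullet> f t x y z + (norm z)\<^sup>2) + K"
    by blast
  have dnb: "delay_norm m (delayed m \<tau> x t) \<le> B" if "\<And>s. norm (x s) \<le> B"
    for x :: "real \<Rightarrow> 'a" and t B
  proof -
    have "finite ((\<lambda>j. norm (delayed m \<tau> x t j)) ` {1..m})" by simp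
    moreover have "(\<lambda>j. norm (delayed m \<tau> x t j)) ` {1..m} \<noteq> {}" using m by auto
    ultimately show ?thesis unfolding delay_norm_def
      by (subst Max_le_iff) (auto simp: delayed_def that)
  qed
  show ?thesis
  proof (intro exI[of _ "2 * pi * K"] conjI allI impI)
    show "2 * pi * K > 0" using K by simp
  next
    fix x t assume ps: "periodic_solution f m \<tau> x"
    define x' where "x' = (\<lambda>s. vector_derivative x (at s))"
    define x'' where "x'' = (\<lambda>s. vector_derivative x' (at s))"
    have per: "\<forall>t. x (t + 2 * pi) = x t" using ps unfolding periodic_solution_def by blast
    have dx: "\<And>s. (x has_vector_derivative x' s) (at s)"
      using ps unfolding periodic_solution_def x'_def by (simp add: vector_derivative_works[symmetric])
    have ddx: "(x' has_vector_derivative x'' s) (at s)" for s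
    proof -
      have "x' differentiable at s" using ps unfolding periodic_solution_def x'_def by blast
      then show ?thesis unfolding x''_def by (rule vector_derivative_works[THEN iffD1])
    qed
    have eq: "\<And>s. x'' s = f s (x s) (delayed m \<tau> x s) (x' s)"
      using ps unfolding periodic_solution_def x''_def x'_def by blast
    have per': "\<And>s. x' (s + 2 * pi) = x' s" by (rule vderiv_periodic[OF per dx])
    have contx: "continuous_on UNIV x"
      using dx by (meson continuous_at_imp_continuous_on differentiableI_vector differentiable_imp_continuous_within)
    have dq: "\<And>s. ((\<lambda>s. x s \<bullet> x' s) has_real_derivative (x' s \<bullet> x' s + x s \<bullet> x'' s)) (at s)"
      by (rule inner_vderiv[OF dx ddx])
    have dg: "\<And>s. ((\<lambda>s. x s \<bullet> x s) has_real_derivative (2 * (x s \<bullet> x' s))) (at s)"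
    proof -
      fix s
      have "((\<lambda>s. x s \<bullet> x s) has_real_derivative (x' s \<bullet> x s + x s \<bullet> x' s)) (at s)"
        by (rule inner_vderiv[OF dx dx])
      then show "?thesis s" by (simp add: inner_commute)
    qed
    have bound: "\<And>s. norm (x s) < R"
    proof -
      define g where "g = (\<lambda>s. x s \<bullet> x s)"
      have "continuous_on {0..2*pi} g" unfolding g_def
        by (intro continuous_intros continuous_on_subset[OF contx]) auto
      then obtain t0 where t0: "t0 \<in> {0..2*pi}" and t0max: "\<forall>s\<in>{0..2*pi}. g s \<le> g t0"
        using continuous_attains_sup[of "{0..2*pi}" g] by auto
      have gmax: "g s \<le> g t0" for s
      proof -
        define k where "k = \<lfloor>s / (2*pi)\<rfloor>"
        have k1: "of_int k \<le> s / (2*pi)" "s / (2*pi) < of_int k + 1" unfolding k_def by linarith+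
        have "of_int k * (2*pi) \<le> s" "s < (of_int k + 1) * (2*pi)"
          using k1 by (simp_all add: field_simps)
        then have "s + of_int (-k) * (2*pi) \<in> {0..2*pi}" by (simp add: algebra_simps)
        moreover have "g (s + of_int (-k) * (2*pi)) = g s" unfolding g_def using per_int[OF per, of s "-k"] by simp
        ultimately show ?thesis using t0max by metis
      qed
      have nx: "norm (x s) \<le> norm (x t0)" for s using gmax[of s] unfolding g_def by (simp add: norm_le)
      show "norm (x s) < R" for s
      proof (rule ccontr)
        assume "\<not> norm (x s) < R"
        then have big: "norm (x t0) \<ge> R" using nx[of s] by linarith
        have q0: "2 * (x t0 \<bullet> x' t0) = 0"
          using DERIV_local_max[OF dg[of t0], of 1] gmax unfolding g_def by auto
        have "delay_norm m (delayed m \<tau> x t0) \<le> norm (x t0)" by (rule dnb[OF nx])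
        then have pos: "x t0 \<bullet> x'' t0 > 0" using A1 big q0 eq by auto
        have "x' t0 \<bullet> x' t0 + x t0 \<bullet> x'' t0 > 0" using pos by (simp add: add_nonneg_pos)
        from DERIV_pos_inc_right[OF dq[of t0] this] obtain d where d: "d > 0"
          and dinc: "\<forall>h>0. h < d \<longrightarrow> x t0 \<bullet> x' t0 < x (t0 + h) \<bullet> x' (t0 + h)" by blast
        have "t0 < t0 + d/2" using d by simp
        from MVT2[OF this dg] obtain z where z: "t0 < z" "z < t0 + d/2"
          and zeq: "g (t0 + d/2) - g t0 = (t0 + d/2 - t0) * (2 * (x z \<bullet> x' z))"
          unfolding g_def by blast
        have "x t0 \<bullet> x' t0 < x z \<bullet> x' z" using dinc[rule_format, of "z - t0"] z d by simp
        then have "x z \<bullet> x' z > 0" using q0 by simp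
        then have "g (t0 + d/2) - g t0 > 0" using zeq d by simp
        then show False using gmax[of "t0 + d/2"] by simp
      qed
    qed
    have dnR: "\<And>s. delay_norm m (delayed m \<tau> x s) \<le> R"
      by (rule dnb) (use bound less_imp_le in blast)
    have keyb: "\<And>s. norm (x'' s) \<le> \<alpha> * (x' s \<bullet> x' s + x s \<bullet> x'' s) + K"
    proof -
      fix s
      have "norm (x'' s) \<le> \<alpha> * (x s \<bullet> x'' s + (norm (x' s))\<^sup>2) + K"
        unfolding eq by (rule A3') (use bound less_imp_le dnR in auto)
      then show "?thesis s" by (simp add: power2_norm_eq_inner algebra_simps)
    qed
    define v where "v = x' t"
    show "norm (x' t) \<le> 2 * pi * K"
    proof (cases "v = 0")
      case True then show ?thesis using K unfolding v_def by simp
    next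
      case False
      define h where "h = (\<lambda>s. x' s \<bullet> v)"
      define u where "u = (\<lambda>s. norm v * (\<alpha> * (x s \<bullet> x' s) + K * s))"
      have dh: "\<And>s. (h has_real_derivative (x'' s \<bullet> v)) (at s)"
      proof -
        fix s
        have "(h has_real_derivative (x'' s \<bullet> v + x' s \<bullet> 0)) (at s)"
          unfolding h_def by (rule inner_vderiv[OF ddx]) (rule has_vector_derivative_const)
        then show "?thesis s" by simp
      qed
      have du: "\<And>s. (u has_real_derivative (norm v * (\<alpha> * (x' s \<bullet> x' s + x s \<bullet> x'' s) + K))) (at s)"
        unfolding u_def by (auto intro!: derivative_eq_intros dq)
      have hle: "\<bar>x'' s \<bullet> v\<bar> \<le> norm v * (\<alpha> * (x' s \<bullet> x' s + x s \<bullet> x'' s) + K)" for s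
      proof -
        have "\<bar>x'' s \<bullet> v\<bar> \<le> norm (x'' s) * norm v" by (rule Cauchy_Schwarz_ineq2)
        also have "\<dots> \<le> (\<alpha> * (x' s \<bullet> x' s + x s \<bullet> x'' s) + K) * norm v"
          by (rule mult_right_mono[OF keyb]) simp
        finally show ?thesis by (simp add: mult.commute)
      qed
      have umono: "u a \<le> u b" if "a \<le> b" for a b
        by (rule DERIV_nonneg_imp_nondecreasing[OF that]) (use du hle in \<open>force intro: order_trans[OF abs_ge_zero]\<close>)
      have wmono: "u a - h a \<le> u b - h b" if "a \<le> b" for a b
      proof (rule DERIV_nonneg_imp_nondecreasing[OF that, of "\<lambda>s. u s - h s"])
        fix s
        show "\<exists>y. ((\<lambda>s. u s - h s) has_real_derivative y) (at s) \<and> 0 \<le> y"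
          using DERIV_diff[OF du dh] hle[of s] by (intro exI conjI) (assumption, linarith)
      qed
      have "t - 2*pi < t" by simp
      have dp: "((\<lambda>s. x s \<bullet> v) has_real_derivative h s) (at s)" for s
      proof -
        have "((\<lambda>s. x s \<bullet> v) has_real_derivative (x' s \<bullet> v + x s \<bullet> 0)) (at s)"
          by (rule inner_vderiv[OF dx]) (rule has_vector_derivative_const)
        then show ?thesis unfolding h_def by simp
      qed
      from MVT2[OF \<open>t - 2*pi < t\<close> dp] obtain z where z: "t - 2*pi < z" "z < t"
        and zeq: "x t \<bullet> v - x (t - 2*pi) \<bullet> v = (t - (t - 2*pi)) * h z" by blast
      have "x (t - 2*pi) = x t" using per[rule_format, of "t - 2*pi"] by simp
      then have hz: "h z = 0" using zeq by simp
      have x'p: "x' (t - 2*pi) = x' t" using per'[of "t - 2*pi"] by simp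
      have xp: "x (t - 2*pi) = x t" using per[rule_format, of "t - 2*pi"] by simp
      have "h t \<le> u t - u z" using wmono[of z t] z hz by simp
      also have "\<dots> \<le> u t - u (t - 2*pi)" using umono[of "t - 2*pi" z] z by simp
      also have "\<dots> = norm v * (K * (2*pi))" unfolding u_def using x'p xp by (simp add: algebra_simps)
      finally have "norm v * norm v \<le> norm v * (2*pi*K)"
        unfolding h_def v_def by (simp add: power2_norm_eq_inner[symmetric] power2_eq_square mult.commute mult.left_commute)
      then have "norm v \<le> 2*pi*K" using False by simp
      then show ?thesis unfolding v_def .
    qed
  qed
qed

end
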